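(* For every $m\in\mathbb{N}$ and every $\boldsymbol{X}=(X_1,\dots,X_m)\in\mathbb{N}^m$, with $\widehat{\boldsymbol{\mu}}_m$ the empirical measure of $\boldsymbol{X}$, $$\frac{1}{2\sqrt2}\Phi_m(\widehat{\boldsymbol{\mu}}_m)\le\hat{\mathfrak{R}}_m(\boldsymbol{X})\le\frac12\Phi_m(\widehat{\boldsymbol{\mu}}_m).$$
   Context: $\widehat{\boldsymbol{\mu}}_m(i)=\frac1m\sum_{t=1}^m\mathbb{I}\{X_t=i\}$. $\Phi_m(\widehat{\boldsymbol{\mu}}_m):=\frac1{\sqrt m}\sum_{j\in\mathbb{N}}\sqrt{\widehat{\boldsymbol{\mu}}_m(j)}$. $\hat{\mathfrak{R}}_m(\boldsymbol{X})=\mathbb{E}_{\boldsymbol{\sigma}}\big[\sup_{f:\mathbb{N}\to\{0,1\}}\frac1m\sum_{t=1}^m\sigma_tf(X_t)\big]$ with $\boldsymbol{\sigma}$ uniform on $\{-1,1\}^m$. *)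

theory Defs
  imports "HOL-Analysis.Analysis"
begin

text \<open>Samples are X :: nat => nat, with X_1..X_m the relevant entries.\<close>

definition emp_measure :: "nat \<Rightarrow> (nat \<Rightarrow> nat) \<Rightarrow> nat \<Rightarrow> real" where
  "emp_measure m X i = real (card {t \<in> {1..m}. X t = i}) / real m"

definition Phi :: "nat \<Rightarrow> (nat \<Rightarrow> real) \<Rightarrow> real" where
  "Phi m \<mu> = (1 / sqrt (real m)) * (\<Sum>\<^sub>\<infinity> j \<in> (UNIV :: nat set). sqrt (\<mu> j))"

definition sign_vectors :: "nat \<Rightarrow> (nat \<Rightarrow> real) set" where
  "sign_vectors m = {\<sigma>. (\<forall>t \<in> {1..m}. \<sigma> t \<in> {-1, 1}) \<and> (\<forall>t. t \<notin> {1..m} \<longrightarrow> \<sigma> t = 0)}"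

definition emp_rademacher :: "nat \<Rightarrow> (nat \<Rightarrow> nat) \<Rightarrow> real" where
  "emp_rademacher m X =
     (\<Sum>\<sigma> \<in> sign_vectors m.
        (SUP f \<in> (UNIV :: (nat \<Rightarrow> bool) set).
           (1 / real m) * (\<Sum>t = 1..m. \<sigma> t * of_bool (f (X t)))))
     / real (card (sign_vectors m))"

end

theory Submission
  imports Defs
begin


fun T :: "(real \<Rightarrow> real) \<Rightarrow> nat \<Rightarrow> real \<Rightarrow> real" where
  "T F 0 x = F x"
| "T F (Suc n) x = T F n (x+1) + T F n (x-1)"

lemma T_lin: "T (\<lambda>y. c * F y + d * G y) n x = c * T F n x + d * T G n x"
  by (induction n arbitrary: x) (auto simp: algebra_simps)

lemma T_id: "T (\<lambda>y. y) n x = 2^n * x"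
  by (induction n arbitrary: x) (auto simp: algebra_simps)

lemma T_const: "T (\<lambda>y. c) n x = 2^n * c"
  by (induction n arbitrary: x) (auto simp: algebra_simps)

lemma T_last: "T F (Suc n) x = T (\<lambda>y. F (y+1) + F (y-1)) n x"
proof (induction n arbitrary: x)
  case 0 then show ?case by simp
next
  case (Suc n)
  have "T F (Suc (Suc n)) x = T F (Suc n) (x+1) + T F (Suc n) (x-1)" by (rule T.simps(2))
  also have "\<dots> = T (\<lambda>y. F (y+1) + F (y-1)) n (x+1) + T (\<lambda>y. F (y+1) + F (y-1)) n (x-1)"
    by (simp only: Suc.IH)
  also have "\<dots> = T (\<lambda>y. F (y+1) + F (y-1)) (Suc n) x" by (rule T.simps(2)[symmetric])
  finally show ?case .
qed

lemma T_cong_int: "(\<And>y. y \<in> \<int> \<Longrightarrow> F y = G y) \<Longrightarrow> x \<in> \<int> \<Longrightarrow> T F n x = T G n x"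
  by (induction n arbitrary: x) auto

lemma sqrt_avg: "sqrt a + sqrt b \<le> 2 * sqrt ((a+b)/2)" if "a \<ge> 0" "b \<ge> 0" for a b :: real
proof -
  define u v where "u = sqrt a" and "v = sqrt b"
  have a: "a = u^2" and b: "b = v^2" using that by (simp_all add: u_def v_def)
  have "(u + v)^2 \<le> 2 * (a + b)" unfolding a b
    using sum_squares_ge_zero[of "u - v" 0] by (simp add: power2_eq_square algebra_simps)
  then have "u + v \<le> sqrt (2 * (a + b))" by (rule real_le_rsqrt)
  also have "sqrt (2 * (a + b)) = sqrt (2^2 * ((a+b)/2))" by simp
  also have "\<dots> = 2 * sqrt ((a+b)/2)" by (simp only: real_sqrt_mult) simp
  finally show ?thesis by (simp add: u_def v_def)
qed

lemma T_abs_upper: "T abs n x \<le> 2^n * sqrt (x^2 + n)"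
proof (induction n arbitrary: x)
  case 0 then show ?case by simp
next
  case (Suc n)
  have "T abs (Suc n) x \<le> 2^n * (sqrt ((x+1)^2 + n) + sqrt ((x-1)^2 + n))"
    using Suc[of "x+1"] Suc[of "x-1"] by (simp add: algebra_simps)
  also have "\<dots> \<le> 2^n * (2 * sqrt ((((x+1)^2 + n) + ((x-1)^2 + n))/2))"
    by (intro mult_left_mono sqrt_avg) auto
  also have "(((x+1)^2 + n) + ((x-1)^2 + n))/2 = x^2 + real (Suc n)"
    by (simp add: power2_eq_square algebra_simps)
  finally show ?case by simp
qed

lemma T_closed: "T F n x = (\<Sum>k\<le>n. real (n choose k) * F (x + real n - 2 * real k))"
proof (induction n arbitrary: x)
  case 0 then show ?case by simp
next
  case (Suc n)
  define G where "G k = F (x + real (Suc n) - 2 * real k)" for k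
  have "(\<Sum>k\<le>Suc n. real (Suc n choose k) * G k)
      = G 0 + (\<Sum>k\<le>n. real (Suc n choose Suc k) * G (Suc k))"
    by (subst sum.atMost_Suc_shift) simp
  also have "\<dots> = (G 0 + (\<Sum>k\<le>n. real (n choose Suc k) * G (Suc k)))
                 + (\<Sum>k\<le>n. real (n choose k) * G (Suc k))"
    by (simp add: sum.distrib algebra_simps)
  also have "G 0 + (\<Sum>k\<le>n. real (n choose Suc k) * G (Suc k)) = (\<Sum>k\<le>Suc n. real (n choose k) * G k)"
    by (subst sum.atMost_Suc_shift) simp
  also have "\<dots> = (\<Sum>k\<le>n. real (n choose k) * G k)" by simp
  finally have "(\<Sum>k\<le>Suc n. real (Suc n choose k) * G k)
      = (\<Sum>k\<le>n. real (n choose k) * G k) + (\<Sum>k\<le>n. real (n choose k) * G (Suc k))" .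
  moreover have "T F (Suc n) x = (\<Sum>k\<le>n. real (n choose k) * G k) + (\<Sum>k\<le>n. real (n choose k) * G (Suc k))"
    by (simp add: Suc G_def algebra_simps)
  ultimately show ?case by (simp add: G_def)
qed

definition dl :: "real \<Rightarrow> real" where "dl y = (if y = 0 then 1 else 0)"

lemma T_dl_even: "T dl (2*k) 0 = real ((2*k) choose k)"
proof -
  have "T dl (2*k) 0 = (\<Sum>i\<le>2*k. if i = k then real ((2*k) choose i) else 0)"
    unfolding T_closed dl_def by (intro sum.cong) auto
  also have "\<dots> = real ((2*k) choose k)" by (subst sum.delta) auto
  finally show ?thesis .
qed

lemma T_dl_odd: "T dl (Suc (2*k)) 0 = 0"
proof -
  have "\<And>i::nat. real (Suc (2*k)) - 2 * real i \<noteq> 0"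
  proof
    fix i :: nat assume "real (Suc (2*k)) - 2 * real i = 0"
    then have "Suc (2*k) = 2*i" by linarith
    then show False by presburger
  qed
  then show ?thesis unfolding T_closed dl_def by simp
qed

definition e :: "nat \<Rightarrow> real" where "e n = T abs n 0 / 2^n"

lemma e_rec: "e (Suc n) = e n + T dl n 0 / 2^n"
proof -
  have "T abs (Suc n) 0 = T (\<lambda>y. \<bar>y+1\<bar> + \<bar>y-1\<bar>) n 0" by (simp only: T_last)
  also have "\<dots> = T (\<lambda>y. 2 * \<bar>y\<bar> + 2 * dl y) n 0"
  proof (rule T_cong_int)
    fix y :: real assume "y \<in> \<int>"
    then obtain z :: int where "y = z" by (auto elim: Ints_cases)
    then show "\<bar>y+1\<bar> + \<bar>y-1\<bar> = 2 * \<bar>y\<bar> + 2 * dl y"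
      by (cases "z = 0"; cases "z > 0") (auto simp: dl_def)
  qed simp
  also have "\<dots> = 2 * T abs n 0 + 2 * T dl n 0" by (rule T_lin)
  finally show ?thesis unfolding e_def by (simp add: field_simps)
qed

definition p :: "nat \<Rightarrow> real" where "p k = real ((2*k) choose k) / 4^k"

lemma g1: "b \<noteq> 0 \<Longrightarrow> 4 * b * (X / (4 * b^2)) = X / (b::real)"
  by (simp add: power2_eq_square field_simps)
lemma g2: "c \<noteq> 0 \<Longrightarrow> (c * Y) * (Z / (c * b)) = Y * Z / (b::real)"
  by (cases "b = 0") (simp_all add: field_simps)
lemma pl_aux: fixes q r :: real assumes k: "r > 0"
  shows "4 * (r + 1) * (q * (2 * r + 1) / (2 * r + 2))^2 = (4 * r * q^2) * ((2 * r + 1)^2 / (4 * r * (r + 1)))"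
proof -
  have b: "r + 1 \<noteq> 0" using k by simp
  have "(q * (2 * r + 1) / (2 * r + 2))^2 = q^2 * (2 * r + 1)^2 / (4 * (r+1)^2)"
    by (simp add: power_divide power_mult_distrib power2_eq_square algebra_simps)
  then have "4 * (r+1) * (q * (2 * r + 1) / (2 * r + 2))^2 = q^2 * (2 * r + 1)^2 / (r + 1)"
    using g1[OF b] by simp
  also have "\<dots> = (4 * r * q^2) * ((2 * r + 1)^2 / (4 * r * (r + 1)))"
    using g2[of "4 * r" "q^2" "(2 * r + 1)^2" "r + 1"] k by (simp add: mult.assoc)
  finally show ?thesis .
qed

lemma p_aux: "c' * (real k + 1) = 2 * (2 * real k + 1) * c \<Longrightarrow>
   c' / 4^(Suc k) * (2 * real k + 2) = c / 4^k * (2 * real k + 1)"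
proof -
  assume h: "c' * (real k + 1) = 2 * (2 * real k + 1) * c"
  have "c' / 4^(Suc k) * (2 * real k + 2) = (c' * (real k + 1)) / (2 * 4^k)" by (simp add: field_simps)
  also have "\<dots> = c / 4^k * (2 * real k + 1)" unfolding h by (simp add: field_simps)
  finally show ?thesis .
qed

lemma p_rec: "p (Suc k) * (2 * real k + 2) = p k * (2 * real k + 1)"
proof -
  have a: "(Suc (Suc (2*k)) choose Suc k) * Suc k = 2 * (Suc (2*k)) * ((2*k) choose k)"
  proof -
    have "Suc (Suc (2*k)) * (Suc (2*k) choose k) = (Suc (Suc (2*k)) choose Suc k) * Suc k"
      by (rule Suc_times_binomial_eq)
    moreover have "Suc (2*k) * ((2*k) choose k) = (Suc (2*k) choose Suc k) * Suc k"
      by (rule Suc_times_binomial_eq)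
    moreover have "(Suc (2*k) choose Suc k) = (Suc (2*k) choose k)"
      using binomial_symmetric[of "Suc k" "Suc (2*k)"] by simp
    ultimately have "(Suc (Suc (2*k)) choose Suc k) * Suc k = 2 * (Suc k * (Suc (2*k) choose k))"
      by simp
    also have "\<dots> = 2 * (Suc (2*k) * ((2*k) choose k))"
      using \<open>Suc (2*k) * ((2*k) choose k) = (Suc (2*k) choose Suc k) * Suc k\<close>
        \<open>(Suc (2*k) choose Suc k) = (Suc (2*k) choose k)\<close> by simp
    finally show ?thesis by simp
  qed
  have "real (Suc (Suc (2*k)) choose Suc k) * (real k + 1) = 2 * (2 * real k + 1) * real ((2*k) choose k)"
    using arg_cong[OF a, of real] by (simp add: algebra_simps)
  then have h: "real (Suc (Suc (2*k)) choose Suc k) / 4^(Suc k) * (2 * real k + 2) = real ((2*k) choose k) / 4^k * (2 * real k + 1)"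
    by (rule p_aux)
  have "2 * Suc k = Suc (Suc (2*k))" by simp
  then have "p (Suc k) = real (Suc (Suc (2*k)) choose Suc k) / 4^(Suc k)" by (simp only: p_def)
  then show ?thesis using h by (simp only: p_def)
qed

lemma e_even: "e (2*k) = 2 * real k * p k"
proof (induction k)
  case 0 then show ?case by (simp add: e_def)
next
  case (Suc k)
  have "e (2 * Suc k) = e (Suc (Suc (2*k)))" by simp
  also have "\<dots> = e (2*k) + p k"
    unfolding e_rec using T_dl_odd[of k] T_dl_even[of k] by (simp add: p_def power_mult)
  also have "\<dots> = p (Suc k) * (2 * real k + 2)" using Suc p_rec[of k] by (simp add: algebra_simps)
  finally show ?case by (simp add: algebra_simps)
qed

lemma e_odd: "e (Suc (2*k)) = 2 * real (Suc k) * p (Suc k)"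
proof -
  have "e (Suc (2*k)) = e (2*k) + p k"
    unfolding e_rec using T_dl_even[of k] by (simp add: p_def power_mult)
  also have "\<dots> = p (Suc k) * (2 * real k + 2)" using e_even[of k] p_rec[of k] by (simp add: algebra_simps)
  finally show ?thesis by (simp add: algebra_simps)
qed

lemma p_pos: "p k > 0" unfolding p_def by simp

lemma p_lower: "4 * real k * (p k)^2 \<ge> 1" if "k \<ge> 1"
  using that
proof (induction k rule: dec_induct)
  case base then show ?case by (simp add: p_def power2_eq_square)
next
  case (step k)
  have pk: "p (Suc k) = p k * (2 * real k + 1) / (2 * real k + 2)"
    using p_rec[of k] by (simp add: field_simps)
  have "4 * real (Suc k) * (p (Suc k))^2 = (4 * real k * (p k)^2) * ((2 * real k + 1)^2 / (4 * real k * (real k + 1)))"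
    unfolding pk using pl_aux[of "real k" "p k"] step(1) by (simp add: algebra_simps)
  also have "\<dots> \<ge> 1 * 1"
  proof (rule mult_mono)
    have "4 * real k * (real k + 1) \<le> (2 * real k + 1)^2" by (simp add: power2_eq_square algebra_simps)
    moreover have "0 < 4 * real k * (real k + 1)" using step(1) by simp
    ultimately show "1 \<le> (2 * real k + 1)^2 / (4 * real k * (real k + 1))" by (simp add: le_divide_eq_1_pos)
  qed (use step(3) in auto)
  finally show ?case by simp
qed

lemma e_even_lower: "e (2*k) \<ge> sqrt k"
proof (cases "k = 0")
  case True then show ?thesis by (simp add: e_def)
next
  case False
  have "(2 * real k * p k)^2 = real k * (4 * real k * (p k)^2)" by (simp add: power2_eq_square algebra_simps)
  also have "\<dots> \<ge> real k * 1" using p_lower[of k] False by (intro mult_left_mono) auto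
  finally have "(sqrt k)^2 \<le> (2 * real k * p k)^2" by simp
  moreover have "0 \<le> 2 * real k * p k" using p_pos[of k] by simp
  ultimately have "sqrt k \<le> 2 * real k * p k"
    by (rule power2_le_imp_le)
  then show ?thesis by (simp add: e_even)
qed

lemma e_lower: "e n \<ge> sqrt (real n / 2)"
proof (cases "even n")
  case True
  then obtain k where n: "n = 2*k" by (rule evenE)
  have "real n / 2 = real k" using n by simp
  then show ?thesis using e_even_lower[of k] n by (simp only:)
next
  case False
  then obtain k where n0: "n = 2*k+1" by (rule oddE)
  then have n: "n = Suc (2*k)" by simp
  have 1: "e n = e (2 * Suc k)" using e_odd[of k] e_even[of "Suc k"] n by simp
  have 2: "e (2 * Suc k) \<ge> sqrt (Suc k)" by (rule e_even_lower)
  have 3: "sqrt (real n / 2) \<le> sqrt (Suc k)" using n by (intro real_sqrt_le_mono) simp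
  show ?thesis using 1 2 3 by linarith
qed

lemma e_upper: "e n \<le> sqrt n"
proof -
  have "T abs n 0 \<le> sqrt n * 2^n" using T_abs_upper[of n 0] by (simp add: mult.commute)
  then show ?thesis unfolding e_def by (simp add: pos_divide_le_eq)
qed



definition signs :: "nat set \<Rightarrow> (nat \<Rightarrow> real) set" where
  "signs A = {\<sigma>. (\<forall>t \<in> A. \<sigma> t \<in> {-1, 1}) \<and> (\<forall>t. t \<notin> A \<longrightarrow> \<sigma> t = 0)}"

lemma signs_empty: "signs {} = {\<lambda>_. 0}"
  by (auto simp: signs_def)

lemma signs_insert:
  assumes "a \<notin> A"
  shows "signs (insert a A) = (\<lambda>\<sigma>. \<sigma>(a:=1)) ` signs A \<union> (\<lambda>\<sigma>. \<sigma>(a:=-1)) ` signs A"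
proof
  show "signs (insert a A) \<subseteq> (\<lambda>\<sigma>. \<sigma>(a:=1)) ` signs A \<union> (\<lambda>\<sigma>. \<sigma>(a:=-1)) ` signs A"
  proof
    fix \<sigma> assume s: "\<sigma> \<in> signs (insert a A)"
    have s0: "\<sigma>(a:=0) \<in> signs A" using s assms by (auto simp: signs_def)
    have "\<sigma> a = 1 \<or> \<sigma> a = -1" using s by (auto simp: signs_def)
    then show "\<sigma> \<in> (\<lambda>\<sigma>. \<sigma>(a:=1)) ` signs A \<union> (\<lambda>\<sigma>. \<sigma>(a:=-1)) ` signs A"
    proof
      assume "\<sigma> a = 1"
      then have "\<sigma> = (\<sigma>(a:=0))(a:=1)" by auto
      then show ?thesis using s0 by blast
    next
      assume "\<sigma> a = -1"
      then have "\<sigma> = (\<sigma>(a:=0))(a:=-1)" by auto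
      then show ?thesis using s0 by blast
    qed
  qed
next
  show "(\<lambda>\<sigma>. \<sigma>(a:=1)) ` signs A \<union> (\<lambda>\<sigma>. \<sigma>(a:=-1)) ` signs A \<subseteq> signs (insert a A)"
  proof
    fix \<rho> assume "\<rho> \<in> (\<lambda>\<sigma>. \<sigma>(a:=1)) ` signs A \<union> (\<lambda>\<sigma>. \<sigma>(a:=-1)) ` signs A"
    then obtain \<sigma> c where s: "\<sigma> \<in> signs A" and c: "c \<in> {-1, 1}" and r: "\<rho> = \<sigma>(a:=c)" by blast
    have "\<rho> t \<in> {-1, 1}" if "t \<in> insert a A" for t
    proof (cases "t = a")
      case True then show ?thesis using r c by simp
    next
      case False then have "t \<in> A" using that by simp
      then have "\<sigma> t \<in> {-1, 1}" using s unfolding signs_def by blast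
      then show ?thesis using r False by simp
    qed
    moreover have "\<rho> t = 0" if "t \<notin> insert a A" for t
    proof -
      have "\<sigma> t = 0" using s that unfolding signs_def by blast
      then show ?thesis using r that by simp
    qed
    ultimately show "\<rho> \<in> signs (insert a A)" unfolding signs_def by blast
  qed
qed

lemma inj_upd: "a \<notin> A \<Longrightarrow> inj_on (\<lambda>\<sigma>. \<sigma>(a:=c)) (signs A)"
proof (rule inj_onI)
  fix \<sigma> \<tau> assume a: "a \<notin> A" and s: "\<sigma> \<in> signs A" "\<tau> \<in> signs A" and eq: "\<sigma>(a:=c) = \<tau>(a:=c)"
  show "\<sigma> = \<tau>"
  proof (rule ext)
    fix t show "\<sigma> t = \<tau> t"
    proof (cases "t = a")
      case True then show ?thesis using a s by (simp add: signs_def)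
    next
      case False then show ?thesis using fun_cong[OF eq, of t] by simp
    qed
  qed
qed

lemma finite_signs: "finite A \<Longrightarrow> finite (signs A)"
  by (induction A rule: finite_induct) (simp_all add: signs_empty signs_insert)

lemma sum_signs_insert:
  assumes "a \<notin> A" "finite A"
  shows "(\<Sum>\<sigma>\<in>signs (insert a A). G \<sigma>) = (\<Sum>\<sigma>\<in>signs A. G (\<sigma>(a:=1)) + G (\<sigma>(a:=-1)))"
proof -
  have d: "(\<lambda>\<sigma>. \<sigma>(a:=1)) ` signs A \<inter> (\<lambda>\<sigma>. \<sigma>(a:=-1)) ` signs A = {}"
  proof (rule equals0I)
    fix \<rho> assume "\<rho> \<in> (\<lambda>\<sigma>. \<sigma>(a:=1)) ` signs A \<inter> (\<lambda>\<sigma>. \<sigma>(a:=-1)) ` signs A"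
    then obtain \<sigma> \<sigma>' where r1: "\<rho> = \<sigma>(a:=1)" and r2: "\<rho> = \<sigma>'(a:=-1)" by blast
    have "\<rho> a = 1" using r1 by simp
    moreover have "\<rho> a = -1" using r2 by simp
    ultimately
    show False by simp
  qed
  have "(\<Sum>\<sigma>\<in>signs (insert a A). G \<sigma>) =
        (\<Sum>\<sigma>\<in>(\<lambda>\<sigma>. \<sigma>(a:=1)) ` signs A. G \<sigma>) + (\<Sum>\<sigma>\<in>(\<lambda>\<sigma>. \<sigma>(a:=-1)) ` signs A. G \<sigma>)"
    unfolding signs_insert[OF assms(1)]
    by (rule sum.union_disjoint) (use d finite_signs[OF assms(2)] in auto)
  also have "\<dots> = (\<Sum>\<sigma>\<in>signs A. G (\<sigma>(a:=1))) + (\<Sum>\<sigma>\<in>signs A. G (\<sigma>(a:=-1)))"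
    by (simp add: sum.reindex[OF inj_upd[OF assms(1)]])
  finally show ?thesis by (simp add: sum.distrib)
qed

lemma signs_sum:
  assumes "finite A" "B \<subseteq> A"
  shows "(\<Sum>\<sigma>\<in>signs A. F (x + (\<Sum>t\<in>B. \<sigma> t))) = 2^(card A - card B) * T F (card B) x"
  using assms
proof (induction A arbitrary: B x rule: finite_induct)
  case empty
  then show ?case by (simp add: signs_empty)
next
  case (insert a A)
  show ?case
  proof (cases "a \<in> B")
    case True
    define B' where "B' = B - {a}"
    have B': "B' \<subseteq> A" "finite B'" "a \<notin> B'" "B = insert a B'"
      using insert True finite_subset[OF insert.prems finite_insert[THEN iffD2, OF insert.hyps(1)]]
      by (auto simp: B'_def)
    have cB: "card B = Suc (card B')" using B' by simp
    have sB: "(\<Sum>t\<in>B. (\<sigma>(a:=c)) t) = c + (\<Sum>t\<in>B'. \<sigma> t)" for \<sigma> c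
    proof -
      have "(\<Sum>t\<in>B'. (\<sigma>(a:=c)) t) = (\<Sum>t\<in>B'. \<sigma> t)" using B' by (intro sum.cong) auto
      then show ?thesis using B' by simp
    qed
    have "(\<Sum>\<sigma>\<in>signs (insert a A). F (x + (\<Sum>t\<in>B. \<sigma> t)))
        = (\<Sum>\<sigma>\<in>signs A. F ((x+1) + (\<Sum>t\<in>B'. \<sigma> t))) + (\<Sum>\<sigma>\<in>signs A. F ((x-1) + (\<Sum>t\<in>B'. \<sigma> t)))"
      unfolding sum_signs_insert[OF insert(2,1)] sB by (simp add: sum.distrib algebra_simps)
    also have "\<dots> = 2^(card A - card B') * T F (card B') (x+1) + 2^(card A - card B') * T F (card B') (x-1)"
      using insert.IH[OF B'(1)] by simp
    also have "\<dots> = 2^(card A - card B') * T F (Suc (card B')) x"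
      by (simp only: T.simps(2) distrib_left)
    also have "card A - card B' = card (insert a A) - card B" using insert(1,2) cB by simp
    also have "Suc (card B') = card B" using cB by simp
    finally show ?thesis .
  next
    case False
    then have B: "B \<subseteq> A" using insert by auto
    have cB: "card B \<le> card A" using B insert(1) by (rule card_mono[rotated])
    have sB: "(\<Sum>t\<in>B. (\<sigma>(a:=c)) t) = (\<Sum>t\<in>B. \<sigma> t)" for \<sigma> c
      using False by (intro sum.cong) auto
    have "(\<Sum>\<sigma>\<in>signs (insert a A). F (x + (\<Sum>t\<in>B. \<sigma> t)))
        = 2 * (\<Sum>\<sigma>\<in>signs A. F (x + (\<Sum>t\<in>B. \<sigma> t)))"
      unfolding sum_signs_insert[OF insert(2,1)] sB by (simp add: sum_distrib_left)
    also have "\<dots> = 2^(card (insert a A) - card B) * T F (card B) x"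
    proof -
      have "card (insert a A) - card B = Suc (card A - card B)" using insert(1,2) cB by simp
      then show ?thesis using insert.IH[OF B, of x] by (simp only: power_Suc mult.assoc)
    qed
    finally show ?thesis .
  qed
qed

lemma card_signs: "finite A \<Longrightarrow> card (signs A) = 2 ^ card A"
proof -
  assume A: "finite A"
  have "real (card (signs A)) = (\<Sum>\<sigma>\<in>signs A. (\<lambda>_. 1::real) (0 + (\<Sum>t\<in>{}. \<sigma> t)))"
    by simp
  also have "\<dots> = 2 ^ card A" using signs_sum[OF A, of "{}" "\<lambda>_. 1" 0] by simp
  finally show ?thesis by (metis of_nat_eq_iff of_nat_numeral of_nat_power)
qed

lemma T_max: "T (\<lambda>y. max 0 y) n 0 = T abs n 0 / 2"
proof -
  have "(\<lambda>y::real. max 0 y) = (\<lambda>y. 1/2 * y + 1/2 * \<bar>y\<bar>)" by (auto simp: fun_eq_iff)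
  then show ?thesis using T_lin[of "1/2" "\<lambda>y. y" "1/2" abs n 0] T_id[of n 0] by simp
qed

lemma sum_signs_max:
  assumes "finite A" "B \<subseteq> A"
  shows "(\<Sum>\<sigma>\<in>signs A. max 0 (\<Sum>t\<in>B. \<sigma> t)) = 2 ^ card A * (e (card B) / 2)"
proof -
  have cB: "card B \<le> card A" using assms card_mono by blast
  have "(\<Sum>\<sigma>\<in>signs A. max 0 (\<Sum>t\<in>B. \<sigma> t)) = (\<Sum>\<sigma>\<in>signs A. (\<lambda>y. max 0 y) (0 + (\<Sum>t\<in>B. \<sigma> t)))"
    by simp
  also have "\<dots> = 2^(card A - card B) * (T abs (card B) 0 / 2)"
    using signs_sum[OF assms, of "\<lambda>y. max 0 y" 0] T_max by simp
  also have "T abs (card B) 0 = 2^card B * e (card B)"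
    by (simp add: e_def)
  also have "(2::real)^(card A - card B) * (2^card B * e (card B) / 2) = (2^(card A - card B) * 2^card B) * (e (card B) / 2)"
    by simp
  also have "(2::real)^(card A - card B) * 2^card B = 2^(card A - card B + card B)"
    by (rule power_add[symmetric])
  also have "card A - card B + card B = card A" using cB by simp
  finally show ?thesis .
qed



lemma sup_eq:
  fixes \<sigma> :: "nat \<Rightarrow> real" and m :: nat and X :: "nat \<Rightarrow> nat"
  defines "J \<equiv> X ` {1..m}"
  shows "(SUP f \<in> (UNIV :: (nat \<Rightarrow> bool) set). (1 / real m) * (\<Sum>t = 1..m. \<sigma> t * of_bool (f (X t))))
       = (1 / real m) * (\<Sum>j\<in>J. max 0 (\<Sum>t\<in>{t \<in> {1..m}. X t = j}. \<sigma> t))"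
proof -
  define S where "S j = (\<Sum>t\<in>{t \<in> {1..m}. X t = j}. \<sigma> t)" for j
  have fJ: "finite J" unfolding J_def by simp
  have key: "(\<Sum>t = 1..m. \<sigma> t * of_bool (f (X t))) = (\<Sum>j\<in>J. of_bool (f j) * S j)" for f
  proof -
    have "(\<Sum>t = 1..m. \<sigma> t * of_bool (f (X t))) = (\<Sum>j\<in>J. \<Sum>t\<in>{t \<in> {1..m}. X t = j}. \<sigma> t * of_bool (f (X t)))"
      by (rule sum.group[symmetric]) (simp_all add: J_def)
    also have "\<dots> = (\<Sum>j\<in>J. of_bool (f j) * S j)"
      unfolding S_def by (intro sum.cong refl) (auto simp: sum_distrib_left intro!: sum.cong)
    finally show ?thesis .
  qed
  define f0 where "f0 j = (S j > 0)" for j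
  have "(SUP f \<in> (UNIV :: (nat \<Rightarrow> bool) set). (1 / real m) * (\<Sum>t = 1..m. \<sigma> t * of_bool (f (X t))))
       = (1 / real m) * (\<Sum>j\<in>J. max 0 (S j))"
  proof (rule cSup_eq_maximum)
    have "(\<Sum>j\<in>J. of_bool (f0 j) * S j) = (\<Sum>j\<in>J. max 0 (S j))"
      by (intro sum.cong) (auto simp: f0_def)
    then show "(1 / real m) * (\<Sum>j\<in>J. max 0 (S j)) \<in> (\<lambda>f. (1 / real m) * (\<Sum>t = 1..m. \<sigma> t * of_bool (f (X t)))) ` UNIV"
      unfolding key by (intro image_eqI[of _ _ f0]) auto
  next
    fix y assume "y \<in> (\<lambda>f. (1 / real m) * (\<Sum>t = 1..m. \<sigma> t * of_bool (f (X t)))) ` UNIV"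
    then obtain f where y: "y = (1 / real m) * (\<Sum>j\<in>J. of_bool (f j) * S j)" unfolding key by blast
    have "(\<Sum>j\<in>J. of_bool (f j) * S j) \<le> (\<Sum>j\<in>J. max 0 (S j))"
      by (intro sum_mono) auto
    then show "y \<le> (1 / real m) * (\<Sum>j\<in>J. max 0 (S j))"
      unfolding y by (intro mult_left_mono) auto
  qed
  then show ?thesis unfolding S_def .
qed

lemma rad_eq:
  "emp_rademacher m X = (1 / real m) * (\<Sum>j\<in>X ` {1..m}. e (card {t \<in> {1..m}. X t = j}) / 2)"
proof -
  define J where "J = X ` {1..m}"
  define B where "B j = {t \<in> {1..m}. X t = j}" for j
  have sv: "sign_vectors m = signs {1..m}" unfolding sign_vectors_def signs_def by simp
  have cs: "real (card (signs {1..m})) = 2^m" using card_signs[of "{1..m}"] by simp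
  have "emp_rademacher m X = (\<Sum>\<sigma>\<in>signs {1..m}. (1 / real m) * (\<Sum>j\<in>J. max 0 (\<Sum>t\<in>B j. \<sigma> t))) / 2^m"
    unfolding emp_rademacher_def sv sup_eq cs J_def B_def by simp
  also have "\<dots> = (1 / real m) * (\<Sum>j\<in>J. (\<Sum>\<sigma>\<in>signs {1..m}. max 0 (\<Sum>t\<in>B j. \<sigma> t))) / 2^m"
    by (simp only: sum_distrib_left[symmetric] sum.swap[of _ J])
  also have "\<dots> = (1 / real m) * (\<Sum>j\<in>J. 2^m * (e (card (B j)) / 2)) / 2^m"
  proof -
    have "(\<Sum>\<sigma>\<in>signs {1..m}. max 0 (\<Sum>t\<in>B j. \<sigma> t)) = 2^m * (e (card (B j)) / 2)" for j
    proof -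
      have "B j \<subseteq> {1..m}" by (auto simp: B_def)
      then show ?thesis using sum_signs_max[of "{1..m}" "B j"] by simp
    qed
    then show ?thesis by (simp only:)
  qed
  also have "(\<Sum>j\<in>J. (2::real)^m * (e (card (B j)) / 2)) = 2^m * (\<Sum>j\<in>J. e (card (B j)) / 2)"
    by (rule sum_distrib_left[symmetric])
  also have "(1 / real m) * (2^m * (\<Sum>j\<in>J. e (card (B j)) / 2)) / 2^m = (1 / real m) * (\<Sum>j\<in>J. e (card (B j)) / 2)"
    by simp
  finally show ?thesis unfolding J_def B_def .
qed

lemma phi_eq:
  "Phi m (emp_measure m X) = (1 / real m) * (\<Sum>j\<in>X ` {1..m}. sqrt (card {t \<in> {1..m}. X t = j}))"
proof -
  define J where "J = X ` {1..m}"
  define n where "n j = card {t \<in> {1..m}. X t = j}" for j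
  have "(\<Sum>\<^sub>\<infinity> j \<in> (UNIV :: nat set). sqrt (emp_measure m X j)) = (\<Sum>\<^sub>\<infinity> j \<in> J. sqrt (emp_measure m X j))"
  proof (rule infsum_cong_neutral)
    fix j assume "j \<in> UNIV - J"
    then have "{t \<in> {1..m}. X t = j} = {}" unfolding J_def by auto
    then show "sqrt (emp_measure m X j) = 0" unfolding emp_measure_def by simp
  qed auto
  also have "\<dots> = (\<Sum>j\<in>J. sqrt (real (n j) / real m))"
    unfolding J_def n_def emp_measure_def by simp
  finally have 1: "(\<Sum>\<^sub>\<infinity> j \<in> (UNIV :: nat set). sqrt (emp_measure m X j)) = (\<Sum>j\<in>J. sqrt (real (n j) / real m))" .
  have "(1 / sqrt (real m)) * sqrt (real (n j) / real m) = (1 / real m) * sqrt (n j)" for j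
  proof (cases "m = 0")
    case True then show ?thesis by simp
  next
    case False
    have "sqrt (real m) * sqrt (real m) = real m" by simp
    then show ?thesis using False by (simp add: real_sqrt_divide field_simps)
  qed
  then show ?thesis unfolding Phi_def 1 J_def n_def by (simp add: sum_distrib_left)
qed

theorem lemma2:
  fixes m :: nat and X :: "nat \<Rightarrow> nat"
  shows "1 / (2 * sqrt 2) * Phi m (emp_measure m X) \<le> emp_rademacher m X
       \<and> emp_rademacher m X \<le> 1 / 2 * Phi m (emp_measure m X)"
proof -
  define J where "J = X ` {1..m}"
  define n where "n j = card {t \<in> {1..m}. X t = j}" for j
  have R: "emp_rademacher m X = (1 / real m) * (\<Sum>j\<in>J. e (n j) / 2)"
    unfolding rad_eq J_def n_def ..
  have P: "Phi m (emp_measure m X) = (1 / real m) * (\<Sum>j\<in>J. sqrt (n j))"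
    unfolding phi_eq J_def n_def ..
  have l: "1 / (2 * sqrt 2) * sqrt (real k) \<le> e k / 2" for k
  proof -
    have "1 / (2 * sqrt 2) * sqrt (real k) = sqrt (real k / 2) / 2"
      by (simp add: real_sqrt_divide)
    then show ?thesis using e_lower[of k] by simp
  qed
  have u: "e k / 2 \<le> 1 / 2 * sqrt (real k)" for k using e_upper[of k] by simp
  have "1 / (2 * sqrt 2) * Phi m (emp_measure m X) = (1 / real m) * (\<Sum>j\<in>J. 1 / (2 * sqrt 2) * sqrt (n j))"
    unfolding P sum_distrib_left by (intro sum.cong refl) (simp only: mult.left_commute)
  also have "\<dots> \<le> (1 / real m) * (\<Sum>j\<in>J. e (n j) / 2)"
    by (intro mult_left_mono sum_mono l) auto
  finally have 1: "1 / (2 * sqrt 2) * Phi m (emp_measure m X) \<le> emp_rademacher m X" unfolding R .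
  have "emp_rademacher m X \<le> (1 / real m) * (\<Sum>j\<in>J. 1 / 2 * sqrt (n j))"
    unfolding R by (intro mult_left_mono sum_mono u) auto
  also have "\<dots> = 1 / 2 * Phi m (emp_measure m X)"
    unfolding P sum_distrib_left by (intro sum.cong refl) (simp only: mult.left_commute)
  finally show ?thesis using 1 by simp
qed

end
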